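(* For any $\epsilon>0$ and $m\in\mathbb{N}$ there exist $d=d(\epsilon,m)\in\mathbb{N}$ and $\tau=\tau(\epsilon,m)>0$ with the following property. Let $\mathbf{P}=(P_1,\dots,P_C)$ be a sequence of polynomials $\mathbb{F}_p^n\to\mathbb{T}$ of degree at most $d$, and let $\Gamma,\widetilde{\Gamma}:\mathbb{T}^C\to[0,1]$ be functions with $\|\Gamma-\widetilde{\Gamma}\|_\infty\le\tau$. Then $\mathrm{d_{TV}}(\mu_{\Gamma\circ\mathbf{P},m},\mu_{\widetilde{\Gamma}\circ\mathbf{P},m})\le\epsilon$.
   Context: Fix a prime $p$; $\mathbb{T}=\mathbb{R}/\mathbb{Z}$. A (non-classical) polynomial $P:\mathbb{F}_p^n\to\mathbb{T}$ has degree at most $d$ if $D_{y_1}\cdots D_{y_{d+1}}P\equiv0$ where $D_hP(x)=P(x+h)-P(x)$. $(\Gamma\circ\mathbf{P})(x)=\Gamma(P_1(x),\dots,P_C(x))$. For $f:\mathbb{F}_p^n\to[0,1]$ and $m\le n$, $\mu_{f,m}$ is the distribution of $f'\circ A:\mathbb{F}_p^m\to\{0,1\}$, where $f':\mathbb{F}_p^n\to\{0,1\}$ is random with $\Pr[f'(x)=1]=f(x)$ independently for all $x$, and $A:\mathbb{F}_p^m\to\mathbb{F}_p^n$ is a uniformly random affine embedding (injective affine map), independent of $f'$. $\mathrm{d_{TV}}(\mu,\mu')=\frac12\sum_a|\mu(a)-\mu'(a)|$ is the statistical distance. *)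

theory Defs
  imports "HOL-Analysis.Analysis" "HOL-Probability.Probability"
begin

text \<open>Vectors of F_p^n are functions nat => nat with entries in {0..<p} at
  coordinates i < n and 0 at coordinates i >= n.\<close>
definition Fpn :: "nat \<Rightarrow> nat \<Rightarrow> (nat \<Rightarrow> nat) set" where
  "Fpn p n = {x. (\<forall>i<n. x i < p) \<and> (\<forall>i\<ge>n. x i = 0)}"

definition vadd :: "nat \<Rightarrow> (nat \<Rightarrow> nat) \<Rightarrow> (nat \<Rightarrow> nat) \<Rightarrow> (nat \<Rightarrow> nat)" where
  "vadd p x y = (\<lambda>i. (x i + y i) mod p)"

text \<open>The torus T = R/Z is represented by real numbers, two reals being
  identified when they differ by an integer.  D_h P (x) = P(x+h) - P(x).\<close>
definition Dh :: "nat \<Rightarrow> (nat \<Rightarrow> nat) \<Rightarrow> ((nat \<Rightarrow> nat) \<Rightarrow> real) \<Rightarrow> ((nat \<Rightarrow> nat) \<Rightarrow> real)" where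
  "Dh p h P = (\<lambda>x. P (vadd p x h) - P x)"

fun iter_D :: "nat \<Rightarrow> (nat \<Rightarrow> nat) list \<Rightarrow> ((nat \<Rightarrow> nat) \<Rightarrow> real) \<Rightarrow> ((nat \<Rightarrow> nat) \<Rightarrow> real)" where
  "iter_D p [] P = P"
| "iter_D p (y # ys) P = Dh p y (iter_D p ys P)"

text \<open>P : F_p^n -> T has degree at most d: D_{y_1}...D_{y_{d+1}} P vanishes
  identically in T, i.e. is integer-valued as a real function.\<close>
definition poly_deg_le :: "nat \<Rightarrow> nat \<Rightarrow> nat \<Rightarrow> ((nat \<Rightarrow> nat) \<Rightarrow> real) \<Rightarrow> bool" where
  "poly_deg_le p n d P \<longleftrightarrow>
     (\<forall>ys x. length ys = d + 1 \<longrightarrow> set ys \<subseteq> Fpn p n \<longrightarrow> x \<in> Fpn p n \<longrightarrow>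
        iter_D p ys P x \<in> \<int>)"

text \<open>Canonical representatives of T^C: tuples with entries in [0,1) at
  coordinates i < C and 0 beyond.\<close>
definition TC :: "nat \<Rightarrow> (nat \<Rightarrow> real) set" where
  "TC C = {t. (\<forall>i<C. 0 \<le> t i \<and> t i < 1) \<and> (\<forall>i\<ge>C. t i = 0)}"

definition compose_GP :: "nat \<Rightarrow> ((nat \<Rightarrow> real) \<Rightarrow> real) \<Rightarrow> (nat \<Rightarrow> (nat \<Rightarrow> nat) \<Rightarrow> real)
    \<Rightarrow> (nat \<Rightarrow> nat) \<Rightarrow> real" where
  "compose_GP C \<Gamma> P = (\<lambda>x. \<Gamma> (\<lambda>i. if i < C then P i x else 0))"

definition affine_embeddings :: "nat \<Rightarrow> nat \<Rightarrow> nat \<Rightarrow> ((nat \<Rightarrow> nat) \<Rightarrow> (nat \<Rightarrow> nat)) set" where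
  "affine_embeddings p m n =
     {A. \<exists>c v. c \<in> Fpn p n \<and> (\<forall>j<m. v j \<in> Fpn p n) \<and>
         A = restrict (\<lambda>y. (\<lambda>i. (c i + (\<Sum>j<m. y j * v j i)) mod p)) (Fpn p m) \<and>
         inj_on A (Fpn p m)}"

text \<open>mu_{f,m}: distribution of f' o A restricted to F_p^m (value False
  outside F_p^m), f'(x) = True with probability f x independently, A a
  uniformly random affine embedding.\<close>
definition mu :: "nat \<Rightarrow> nat \<Rightarrow> nat \<Rightarrow> ((nat \<Rightarrow> nat) \<Rightarrow> real) \<Rightarrow> ((nat \<Rightarrow> nat) \<Rightarrow> bool) pmf" where
  "mu p n m f =
     bind_pmf (pmf_of_set (affine_embeddings p m n)) (\<lambda>A.
       map_pmf (\<lambda>f'. (\<lambda>y. if y \<in> Fpn p m then f' (A y) else False))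
         (Pi_pmf (Fpn p n) False (\<lambda>x. bernoulli_pmf (f x))))"

text \<open>Statistical distance of two distributions on {0,1}^{F_p^m}.\<close>
definition dTV :: "nat \<Rightarrow> nat \<Rightarrow> ((nat \<Rightarrow> nat) \<Rightarrow> bool) pmf \<Rightarrow> ((nat \<Rightarrow> nat) \<Rightarrow> bool) pmf \<Rightarrow> real" where
  "dTV p m \<mu> \<mu>' = (1/2) * (\<Sum>a\<in>{a. \<forall>y. y \<notin> Fpn p m \<longrightarrow> \<not> a y}. \<bar>pmf \<mu> a - pmf \<mu>' a\<bar>)"

end

theory Submission
  imports Defs
begin


definition qJ :: "real \<Rightarrow> real \<Rightarrow> bool \<Rightarrow> real" where
  "qJ a b s = (if s then (if a = 0 then 0 else min a b / a) else (if a = 1 then 0 else (b - min a b) / (1 - a)))"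

definition J :: "real \<Rightarrow> real \<Rightarrow> (bool \<times> bool) pmf" where
  "J a b = bind_pmf (bernoulli_pmf a) (\<lambda>s. map_pmf (\<lambda>t. (s, t)) (bernoulli_pmf (qJ a b s)))"

lemma qJ_range: assumes "0 \<le> a" "a \<le> 1" "0 \<le> b" "b \<le> 1" shows "0 \<le> qJ a b s \<and> qJ a b s \<le> 1"
  using assms by (auto simp: qJ_def min_def field_simps)

lemma J_fst: "map_pmf fst (J a b) = bernoulli_pmf a"
  by (simp add: J_def map_bind_pmf map_pmf_comp bind_return_pmf')

lemma J_snd: assumes "0 \<le> a" "a \<le> 1" "0 \<le> b" "b \<le> 1"
  shows "map_pmf snd (J a b) = bernoulli_pmf b"
proof (rule pmf_eqI)
  fix t
  have q: "\<And>s. 0 \<le> qJ a b s \<and> qJ a b s \<le> 1" using qJ_range assms by blast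
  have e: "map_pmf snd (J a b) = bind_pmf (bernoulli_pmf a) (\<lambda>s. bernoulli_pmf (qJ a b s))"
    by (simp add: J_def map_bind_pmf map_pmf_comp)
  have key: "qJ a b True * a + qJ a b False * (1 - a) = b"
    using assms by (auto simp: qJ_def min_def field_simps)
  show "pmf (map_pmf snd (J a b)) t = pmf (bernoulli_pmf b) t"
    unfolding e pmf_bind using assms q key
    by (cases t) (auto simp: algebra_simps)
qed

lemma Collect_Not_eq: "Collect Not = {False}" by auto

lemma J_diff: assumes "0 \<le> a" "a \<le> 1" "0 \<le> b" "b \<le> 1"
  shows "measure (J a b) {z. fst z \<noteq> snd z} \<le> \<bar>a - b\<bar>"
proof -
  have q: "\<And>s. 0 \<le> qJ a b s \<and> qJ a b s \<le> 1" using qJ_range assms by blast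
  have "measure (J a b) {z. fst z \<noteq> snd z} = pmf (map_pmf (\<lambda>z. fst z \<noteq> snd z) (J a b)) True"
    by (simp add: pmf_map vimage_def)
  also have "map_pmf (\<lambda>z. fst z \<noteq> snd z) (J a b) = bind_pmf (bernoulli_pmf a) (\<lambda>s. map_pmf (\<lambda>t. s \<noteq> t) (bernoulli_pmf (qJ a b s)))"
    by (simp add: J_def map_bind_pmf map_pmf_comp)
  also have "pmf \<dots> True = pmf (map_pmf (\<lambda>t. True \<noteq> t) (bernoulli_pmf (qJ a b True))) True * a
      + pmf (map_pmf (\<lambda>t. False \<noteq> t) (bernoulli_pmf (qJ a b False))) True * (1 - a)"
    unfolding pmf_bind using assms by simp
  also have "\<dots> = (1 - qJ a b True) * a + qJ a b False * (1 - a)"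
    using q by (simp add: pmf_map vimage_def measure_pmf_single Collect_Not_eq)
  also have "\<dots> = \<bar>a - b\<bar>"
    using assms by (auto simp: qJ_def min_def field_simps)
  finally show ?thesis by simp
qed


lemma coupling_sum:
  fixes W :: "('a \<times> 'a) pmf"
  assumes fin: "finite \<Omega>"
  shows "(\<Sum>a\<in>\<Omega>. \<bar>pmf (map_pmf fst W) a - pmf (map_pmf snd W) a\<bar>) \<le> 2 * measure W {z. fst z \<noteq> snd z}"
proof -
  define D where "D = {z::'a\<times>'a. fst z \<noteq> snd z}"
  define F where "F a = {z. fst z = a} \<inter> D" for a
  define G where "G a = {z. snd z = a} \<inter> D" for a
  have eq1: "pmf (map_pmf fst W) a = measure W (F a) + measure W {z. fst z = a \<and> snd z = a}" for a
  proof -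
    have "{z. fst z = a} = F a \<union> {z. fst z = a \<and> snd z = a}" by (auto simp: F_def D_def)
    moreover have "F a \<inter> {z. fst z = a \<and> snd z = a} = {}" by (auto simp: F_def D_def)
    ultimately have "measure W {z. fst z = a} = measure W (F a) + measure W {z. fst z = a \<and> snd z = a}"
      by (simp add: measure_pmf.finite_measure_Union)
    thus ?thesis by (simp add: pmf_map vimage_def)
  qed
  have eq2: "pmf (map_pmf snd W) a = measure W (G a) + measure W {z. fst z = a \<and> snd z = a}" for a
  proof -
    have "{z. snd z = a} = G a \<union> {z. fst z = a \<and> snd z = a}" by (auto simp: G_def D_def)
    moreover have "G a \<inter> {z. fst z = a \<and> snd z = a} = {}" by (auto simp: G_def D_def)
    ultimately have "measure W {z. snd z = a} = measure W (G a) + measure W {z. fst z = a \<and> snd z = a}"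
      by (simp add: measure_pmf.finite_measure_Union)
    thus ?thesis by (simp add: pmf_map vimage_def)
  qed
  have "(\<Sum>a\<in>\<Omega>. \<bar>pmf (map_pmf fst W) a - pmf (map_pmf snd W) a\<bar>) \<le> (\<Sum>a\<in>\<Omega>. measure W (F a) + measure W (G a))"
    by (intro sum_mono) (simp add: eq1 eq2 abs_le_iff)
  also have "\<dots> = (\<Sum>a\<in>\<Omega>. measure W (F a)) + (\<Sum>a\<in>\<Omega>. measure W (G a))" by (simp add: sum.distrib)
  also have "(\<Sum>a\<in>\<Omega>. measure W (F a)) = measure W (\<Union>a\<in>\<Omega>. F a)"
    by (rule measure_pmf.finite_measure_finite_Union[symmetric]) (auto simp: fin disjoint_family_on_def F_def)
  also have "\<dots> \<le> measure W D"
    by (rule measure_pmf.finite_measure_mono) (auto simp: F_def)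
  also have "(\<Sum>a\<in>\<Omega>. measure W (G a)) = measure W (\<Union>a\<in>\<Omega>. G a)"
    by (rule measure_pmf.finite_measure_finite_Union[symmetric]) (auto simp: fin disjoint_family_on_def G_def)
  also have "\<dots> \<le> measure W D"
    by (rule measure_pmf.finite_measure_mono) (auto simp: G_def)
  finally show ?thesis by (simp add: D_def)
qed

lemma bind_measure_le:
  fixes N :: "'a \<Rightarrow> 'b pmf"
  assumes "\<And>x. measure (N x) X \<le> c"
  shows "measure (bind_pmf M N) X \<le> c"
proof -
  have c0: "0 \<le> c" using assms[of undefined] by (meson measure_nonneg order_trans)
  have "emeasure (bind_pmf M N) X = (\<integral>\<^sup>+x. emeasure (N x) X \<partial>M)" by simp
  also have "\<dots> \<le> (\<integral>\<^sup>+x. ennreal c \<partial>M)"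
    by (intro nn_integral_mono) (simp add: measure_pmf.emeasure_eq_measure ennreal_leI assms)
  also have "\<dots> = ennreal c" by (simp add: measure_pmf.emeasure_space_1)
  finally show ?thesis
    by (simp add: measure_pmf.emeasure_eq_measure c0)
qed

lemma inner_bound:
  fixes J' :: "'b \<Rightarrow> (bool \<times> bool) pmf"
  assumes S: "finite S" and Y: "finite Y"
  shows "measure (Pi_pmf S (False, False) J')
     {h. (\<lambda>y. if y \<in> Y then fst (h (A y)) else False) \<noteq> (\<lambda>y. if y \<in> Y then snd (h (A y)) else False)}
   \<le> (\<Sum>y\<in>Y. if A y \<in> S then measure (J' (A y)) {z. fst z \<noteq> snd z} else 0)"
proof -
  let ?M = "Pi_pmf S (False, False) J'"
  have "measure ?M {h. (\<lambda>y. if y \<in> Y then fst (h (A y)) else False) \<noteq> (\<lambda>y. if y \<in> Y then snd (h (A y)) else False)}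
     \<le> measure ?M (\<Union>y\<in>Y. {h. fst (h (A y)) \<noteq> snd (h (A y))})"
    by (rule measure_pmf.finite_measure_mono) (auto simp: fun_eq_iff split: if_splits)
  also have "\<dots> \<le> (\<Sum>y\<in>Y. measure ?M {h. fst (h (A y)) \<noteq> snd (h (A y))})"
    by (rule measure_pmf.finite_measure_subadditive_finite) (auto simp: Y)
  also have "\<dots> = (\<Sum>y\<in>Y. if A y \<in> S then measure (J' (A y)) {z. fst z \<noteq> snd z} else 0)"
  proof (rule sum.cong[OF refl])
    fix y
    have "measure ?M {h. fst (h (A y)) \<noteq> snd (h (A y))} = measure (map_pmf (\<lambda>h. h (A y)) ?M) {z. fst z \<noteq> snd z}"
      by (simp add: vimage_def)
    also have "\<dots> = (if A y \<in> S then measure (J' (A y)) {z. fst z \<noteq> snd z} else 0)"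
      by (simp add: Pi_pmf_component[OF S])
    finally show "measure ?M {h. fst (h (A y)) \<noteq> snd (h (A y))} = (if A y \<in> S then measure (J' (A y)) {z. fst z \<noteq> snd z} else 0)" .
  qed
  finally show ?thesis .
qed



lemma finFpn: "finite (Fpn p m)"
proof -
  have "finite {f::nat\<Rightarrow>nat. \<forall>x. (x \<in> {..<m} \<longrightarrow> f x \<in> {..<p}) \<and> (x \<notin> {..<m} \<longrightarrow> f x = 0)}"
    by (intro finite_set_of_finite_funs finite_lessThan)
  moreover have "Fpn p m = {f::nat\<Rightarrow>nat. \<forall>x. (x \<in> {..<m} \<longrightarrow> f x \<in> {..<p}) \<and> (x \<notin> {..<m} \<longrightarrow> f x = 0)}"
    unfolding Fpn_def by (rule Collect_cong) (auto simp: not_less)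
  ultimately show ?thesis by simp
qed
lemma finO: "finite Y \<Longrightarrow> finite {a::'a\<Rightarrow>bool. \<forall>y. y \<notin> Y \<longrightarrow> \<not> a y}"
proof -
  assume "finite Y"
  then have "finite {f::'a\<Rightarrow>bool. \<forall>x. (x \<in> Y \<longrightarrow> f x \<in> UNIV) \<and> (x \<notin> Y \<longrightarrow> f x = False)}"
    by (rule finite_set_of_finite_funs) simp_all
  then show ?thesis by simp
qed

theorem lemma5p3:
  fixes p :: nat
  assumes "prime p"
  shows "\<forall>(\<epsilon>::real) > 0. \<forall>m::nat. \<exists>(d::nat) (\<tau>::real). \<tau> > 0 \<and>
    (\<forall>(n::nat) (C::nat) (P :: nat \<Rightarrow> (nat \<Rightarrow> nat) \<Rightarrow> real)
       (\<Gamma> :: (nat \<Rightarrow> real) \<Rightarrow> real) (\<Gamma>' :: (nat \<Rightarrow> real) \<Rightarrow> real).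
       m \<le> n \<longrightarrow>
       (\<forall>i<C. poly_deg_le p n d (P i) \<and> (\<forall>x\<in>Fpn p n. 0 \<le> P i x \<and> P i x < 1)) \<longrightarrow>
       (\<forall>t\<in>TC C. 0 \<le> \<Gamma> t \<and> \<Gamma> t \<le> 1 \<and> 0 \<le> \<Gamma>' t \<and> \<Gamma>' t \<le> 1) \<longrightarrow>
       (\<forall>t\<in>TC C. \<bar>\<Gamma> t - \<Gamma>' t\<bar> \<le> \<tau>) \<longrightarrow>
       dTV p m (mu p n m (compose_GP C \<Gamma> P)) (mu p n m (compose_GP C \<Gamma>' P)) \<le> \<epsilon>)"


proof (intro allI impI)
  fix \<epsilon> :: real and m :: nat
  assume eps: "\<epsilon> > 0"
  define Y where "Y = Fpn p m"
  have finY: "finite Y" unfolding Y_def by (rule finFpn)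
  have finO: "finite {a::(nat\<Rightarrow>nat)\<Rightarrow>bool. \<forall>y. y \<notin> Fpn p m \<longrightarrow> \<not> a y}"
    using finO[OF finY] by (simp add: Y_def)
  define \<tau> where "\<tau> = \<epsilon> / (real (card Y) + 1)"
  have tau: "\<tau> > 0" using eps by (simp add: \<tau>_def)
  have tauY: "real (card Y) * \<tau> \<le> \<epsilon>"
  proof -
    have "real (card Y) * \<tau> \<le> (real (card Y) + 1) * \<tau>" using tau by simp
    also have "\<dots> = \<epsilon>" by (simp add: \<tau>_def)
    finally show ?thesis .
  qed
  show "\<exists>(d::nat) (\<tau>::real). \<tau> > 0 \<and>
    (\<forall>(n::nat) (C::nat) (P :: nat \<Rightarrow> (nat \<Rightarrow> nat) \<Rightarrow> real)
       (\<Gamma> :: (nat \<Rightarrow> real) \<Rightarrow> real) (\<Gamma>' :: (nat \<Rightarrow> real) \<Rightarrow> real).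
       m \<le> n \<longrightarrow>
       (\<forall>i<C. poly_deg_le p n d (P i) \<and> (\<forall>x\<in>Fpn p n. 0 \<le> P i x \<and> P i x < 1)) \<longrightarrow>
       (\<forall>t\<in>TC C. 0 \<le> \<Gamma> t \<and> \<Gamma> t \<le> 1 \<and> 0 \<le> \<Gamma>' t \<and> \<Gamma>' t \<le> 1) \<longrightarrow>
       (\<forall>t\<in>TC C. \<bar>\<Gamma> t - \<Gamma>' t\<bar> \<le> \<tau>) \<longrightarrow>
       dTV p m (mu p n m (compose_GP C \<Gamma> P)) (mu p n m (compose_GP C \<Gamma>' P)) \<le> \<epsilon>)"
  proof (intro exI[of _ "0::nat"] exI[of _ \<tau>] conjI tau allI impI)
    fix n C :: nat and P :: "nat \<Rightarrow> (nat \<Rightarrow> nat) \<Rightarrow> real" and \<Gamma> \<Gamma>' :: "(nat \<Rightarrow> real) \<Rightarrow> real"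
    assume mn: "m \<le> n"
    assume hP: "\<forall>i<C. poly_deg_le p n 0 (P i) \<and> (\<forall>x\<in>Fpn p n. 0 \<le> P i x \<and> P i x < 1)"
      and hG: "\<forall>t\<in>TC C. 0 \<le> \<Gamma> t \<and> \<Gamma> t \<le> 1 \<and> 0 \<le> \<Gamma>' t \<and> \<Gamma>' t \<le> 1"
      and hD: "\<forall>t\<in>TC C. \<bar>\<Gamma> t - \<Gamma>' t\<bar> \<le> \<tau>"
    define S where "S = Fpn p n"
    have finS: "finite S" unfolding S_def by (rule finFpn)
    define f where "f = compose_GP C \<Gamma> P"
    define g where "g = compose_GP C \<Gamma>' P"
    have vecTC: "(\<lambda>i. if i < C then P i x else 0) \<in> TC C" if "x \<in> S" for x
      using hP that by (auto simp: TC_def S_def)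
    have fr: "0 \<le> f x \<and> f x \<le> 1 \<and> 0 \<le> g x \<and> g x \<le> 1" if "x \<in> S" for x
      using hG vecTC[OF that] by (simp add: f_def g_def compose_GP_def)
    have fd: "\<bar>f x - g x\<bar> \<le> \<tau>" if "x \<in> S" for x
      using hD vecTC[OF that] by (simp add: f_def g_def compose_GP_def)
    define J' where "J' x = J (f x) (g x)" for x
    define M where "M = pmf_of_set (affine_embeddings p m n)"
    define \<phi> where "\<phi> A h = (\<lambda>y. if y \<in> Y then h (A y) else False)" for A :: "(nat\<Rightarrow>nat) \<Rightarrow> (nat\<Rightarrow>nat)" and h :: "(nat\<Rightarrow>nat) \<Rightarrow> bool"
    define W where "W = bind_pmf M (\<lambda>A. map_pmf (\<lambda>h. (\<phi> A (fst \<circ> h), \<phi> A (snd \<circ> h))) (Pi_pmf S (False, False) J'))"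
    have eqF: "Pi_pmf S False (\<lambda>x. bernoulli_pmf (f x)) = map_pmf (\<lambda>h. fst \<circ> h) (Pi_pmf S (False,False) J')"
    proof -
      have "Pi_pmf S False (\<lambda>x. bernoulli_pmf (f x)) = Pi_pmf S False (\<lambda>x. map_pmf fst (J' x))"
        by (simp add: J'_def J_fst)
      also have "\<dots> = map_pmf (\<lambda>h. fst \<circ> h) (Pi_pmf S (False,False) J')"
        by (simp add: Pi_pmf_map[OF finS])
      finally show ?thesis .
    qed
    have eqG: "Pi_pmf S False (\<lambda>x. bernoulli_pmf (g x)) = map_pmf (\<lambda>h. snd \<circ> h) (Pi_pmf S (False,False) J')"
    proof -
      have "Pi_pmf S False (\<lambda>x. bernoulli_pmf (g x)) = Pi_pmf S False (\<lambda>x. map_pmf snd (J' x))"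
        by (rule Pi_pmf_cong) (auto simp: J'_def J_snd fr)
      also have "\<dots> = map_pmf (\<lambda>h. snd \<circ> h) (Pi_pmf S (False,False) J')"
        by (simp add: Pi_pmf_map[OF finS])
      finally show ?thesis .
    qed
    have mF: "mu p n m f = map_pmf fst W"
      unfolding mu_def W_def M_def S_def[symmetric] Y_def[symmetric] eqF
      by (simp add: map_bind_pmf map_pmf_comp \<phi>_def o_def)
    have mG: "mu p n m g = map_pmf snd W"
      unfolding mu_def W_def M_def S_def[symmetric] Y_def[symmetric] eqG
      by (simp add: map_bind_pmf map_pmf_comp \<phi>_def o_def)
    have "dTV p m (mu p n m f) (mu p n m g) \<le> (1/2) * (2 * measure W {z. fst z \<noteq> snd z})"
      unfolding dTV_def mF mG by (intro mult_left_mono coupling_sum finO) auto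
    also have "\<dots> = measure W {z. fst z \<noteq> snd z}" by simp
    also have "\<dots> \<le> real (card Y) * \<tau>"
      unfolding W_def
    proof (rule bind_measure_le)
      fix A :: "(nat\<Rightarrow>nat) \<Rightarrow> (nat\<Rightarrow>nat)"
      have "measure (map_pmf (\<lambda>h. (\<phi> A (fst \<circ> h), \<phi> A (snd \<circ> h))) (Pi_pmf S (False, False) J')) {z. fst z \<noteq> snd z}
         = measure (Pi_pmf S (False, False) J')
            {h. (\<lambda>y. if y \<in> Y then fst (h (A y)) else False) \<noteq> (\<lambda>y. if y \<in> Y then snd (h (A y)) else False)}"
        by (simp add: \<phi>_def vimage_def)
      also have "\<dots> \<le> (\<Sum>y\<in>Y. if A y \<in> S then measure (J' (A y)) {z. fst z \<noteq> snd z} else 0)"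
        by (rule inner_bound[OF finS finY])
      also have "\<dots> \<le> (\<Sum>y\<in>Y. \<tau>)"
      proof (rule sum_mono)
        fix y
        show "(if A y \<in> S then measure (J' (A y)) {z. fst z \<noteq> snd z} else 0) \<le> \<tau>"
        proof (cases "A y \<in> S")
          case True
          then show ?thesis using J_diff[of "f (A y)" "g (A y)"] fr[OF True] fd[OF True]
            by (simp add: J'_def)
        next
          case False
          then show ?thesis using tau by simp
        qed
      qed
      also have "\<dots> = real (card Y) * \<tau>" by simp
      finally show "measure (map_pmf (\<lambda>h. (\<phi> A (fst \<circ> h), \<phi> A (snd \<circ> h))) (Pi_pmf S (False, False) J')) {z. fst z \<noteq> snd z} \<le> real (card Y) * \<tau>" .
    qed
    also have "\<dots> \<le> \<epsilon>" by (rule tauY)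
    finally show "dTV p m (mu p n m (compose_GP C \<Gamma> P)) (mu p n m (compose_GP C \<Gamma>' P)) \<le> \<epsilon>"
      by (simp add: f_def g_def)
  qed
qed

end
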